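(* Fix $m\ge1$ and let $\tilde F(u_1,\dots,u_m;t)=\sum_{n\ge0}\sum_{\pi\in\Pi^{(m)}_n}u_1^{a_1(\pi)}\cdots u_m^{a_m(\pi)}t^{n}$. Then, writing $\tilde F(\mathbf u;t)=\tilde F(u_1,\dots,u_m;t)$, \[ \tilde F(\mathbf u;t)=u_1\cdots u_m+t\,u_1\cdots u_m\,\tilde F(\mathbf u;t)+t\,u_1\,\frac{\tilde F(\mathbf u;t)-u_1\tilde F(1,u_2,\dots,u_m;t)}{u_1-1} +t\sum_{j=2}^m u_1u_2\cdots u_j\,\frac{\tilde F(\mathbf u;t)-\tilde F(u_1,\dots,u_{j-2},u_{j-1}u_j,1,u_{j+1},\dots,u_m;t)}{u_j-1}. \]
   Context: A set partition of $[n]$ is a collection of nonempty pairwise disjoint blocks with union $[n]$ ($n=0$: empty partition). Arcs are pairs $(i,j)$, $i<j$, of consecutive elements (in numerical order) of a block. An $m$-nesting is a set of $m$ arcs $(i_1,j_1),\dots,(i_m,j_m)$ with $i_1<\dots<i_m<j_m<\dots<j_1$. $\Pi^{(m)}_n$ is the set of partitions of $[n]$ with no $(m+1)$-nesting. The label $(a_1(\pi),\dots,a_m(\pi))$ of $\pi\in\Pi^{(m)}_n$ is defined by: $a_j(\pi)=1+$(number of blocks) if $\pi$ has no $j$-nesting; otherwise $a_j(\pi)=1+$(number of blocks whose maximal element exceeds the smallest vertex of the rightmost $j$-nesting), the rightmost $j$-nesting being one whose smallest vertex is maximal among all $j$-nestings. The empty partition has label $(1,\dots,1)$. The identity is one of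 formal power series in $t$ with polynomial coefficients in the $u_i$ (the quotients are polynomial). *)

theory Defs
  imports Main "HOL-Library.Disjoint_Sets" "HOL-Computational_Algebra.Formal_Power_Series"
begin

definition set_partitions :: "nat \<Rightarrow> nat set set set" where
  "set_partitions n = {P. partition_on {1..n} P}"

definition arcs :: "nat set set \<Rightarrow> (nat \<times> nat) set" where
  "arcs P = {(i, j). \<exists>B\<in>P. i \<in> B \<and> j \<in> B \<and> i < j \<and> (\<forall>k\<in>B. \<not> (i < k \<and> k < j))}"

definition is_nesting :: "nat set set \<Rightarrow> nat \<Rightarrow> (nat \<times> nat) list \<Rightarrow> bool" where
  "is_nesting P k xs \<longleftrightarrow> length xs = k \<and> set xs \<subseteq> arcs P \<and>
     sorted_wrt (\<lambda>(i, j) (i', j'). i < i' \<and> j' < j) xs"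

definition has_nesting :: "nat set set \<Rightarrow> nat \<Rightarrow> bool" where
  "has_nesting P k \<longleftrightarrow> (\<exists>xs. is_nesting P k xs)"

definition Pi_m :: "nat \<Rightarrow> nat \<Rightarrow> nat set set set" where
  "Pi_m m n = {P \<in> set_partitions n. \<not> has_nesting P (Suc m)}"

definition rightmost_start :: "nat set set \<Rightarrow> nat \<Rightarrow> nat" where
  "rightmost_start P j = Max {fst (hd xs) | xs. is_nesting P j xs}"

definition label :: "nat set set \<Rightarrow> nat \<Rightarrow> nat" where
  "label P j = (if \<not> has_nesting P j then 1 + card P
     else 1 + card {B \<in> P. Max B > rightmost_start P j})"

definition Fcoeff :: "nat \<Rightarrow> (nat \<Rightarrow> real) \<Rightarrow> nat \<Rightarrow> real" where
  "Fcoeff m u n = (\<Sum>P\<in>Pi_m m n. \<Prod>j=1..m. u j ^ label P j)"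

definition Ftilde :: "nat \<Rightarrow> (nat \<Rightarrow> real) \<Rightarrow> real fps" where
  "Ftilde m u = Abs_fps (Fcoeff m u)"

end

theory Submission
  imports Defs
begin


lemma po_block:
  assumes "partition_on {1..(n::nat)} P" "B \<in> P"
  shows "finite B" "B \<noteq> {}" "B \<subseteq> {1..n}"
proof -
  have s: "B \<subseteq> {1..n}" using assms unfolding partition_on_def by auto
  then show "finite B" by (rule finite_subset) simp
  show "B \<noteq> {}" "B \<subseteq> {1..n}" using assms s unfolding partition_on_def by auto
qed

lemma po_Max:
  assumes "partition_on {1..(n::nat)} P" "B \<in> P"
  shows "Max B \<in> B" "1 \<le> Max B" "Max B \<le> n"
  using po_block[OF assms] by (auto, meson Max_in atLeastAtMost_iff subsetD)

lemma po_disj: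
  assumes "partition_on {1..(n::nat)} P" "B \<in> P" "B' \<in> P" "x \<in> B" "x \<in> B'"
  shows "B = B'"
  using assms unfolding partition_on_def disjoint_def by blast

lemma po_finite:
  assumes "partition_on {1..(n::nat)} P" shows "finite P"
proof -
  have "P \<subseteq> Pow {1..n}" using assms unfolding partition_on_def by auto
  then show ?thesis by (rule finite_subset) (simp add: finite_Pow_iff)
qed

lemma po_union: "partition_on {1..n} P \<Longrightarrow> \<Union>P = {1..n}"
  by (simp add: partition_on_def)

lemma arcsD:
  assumes "partition_on {1..(n::nat)} P" "(i,j) \<in> arcs P"
  shows "i < j" "1 \<le> i" "j \<le> n" "\<exists>B\<in>P. i \<in> B \<and> j \<in> B \<and> (\<forall>k\<in>B. \<not> (i < k \<and> k < j))"
proof -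
  obtain B where B: "B\<in>P" "i \<in> B" "j \<in> B" "i < j" "\<forall>k\<in>B. \<not> (i < k \<and> k < j)"
    using assms(2) unfolding arcs_def by blast
  have "B \<subseteq> {1..n}" using po_block(3)[OF assms(1) B(1)] .
  then show "i < j" "1 \<le> i" "j \<le> n" "\<exists>B\<in>P. i \<in> B \<and> j \<in> B \<and> (\<forall>k\<in>B. \<not> (i < k \<and> k < j))"
    using B by auto
qed

lemma arcs_start_not_Max:
  assumes "partition_on {1..(n::nat)} P" "(i,j) \<in> arcs P" "B \<in> P"
  shows "i \<noteq> Max B"
proof
  assume h: "i = Max B"
  obtain B' where B': "B' \<in> P" "i \<in> B'" "j \<in> B'" using arcsD(4)[OF assms(1,2)] by blast
  have "B' = B" using po_disj[OF assms(1) B'(1) assms(3) B'(2)] po_Max(1)[OF assms(1,3)] h by simp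
  then have "j \<le> Max B" using po_block[OF assms(1,3)] B'(3) by simp
  then show False using arcsD(1)[OF assms(1,2)] h by simp
qed

lemma finite_sp: "finite (set_partitions n)"
  unfolding set_partitions_def by (rule finitely_many_partition_on) simp

lemma finite_Pi: "finite (Pi_m m n)"
  unfolding Pi_m_def using finite_sp by simp



definition nest :: "(nat \<times> nat) set \<Rightarrow> nat \<Rightarrow> (nat \<times> nat) list \<Rightarrow> bool" where
  "nest A k xs \<longleftrightarrow> length xs = k \<and> set xs \<subseteq> A \<and>
     sorted_wrt (\<lambda>(i, j) (i', j'). i < i' \<and> j' < j) xs"

lemma is_nesting_nest: "is_nesting P = nest (arcs P)"
  by (intro ext) (simp add: is_nesting_def nest_def)

definition stA :: "(nat \<times> nat) set \<Rightarrow> nat \<Rightarrow> nat set" where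
  "stA A k = {fst (hd xs) | xs. nest A k xs}"

definition rsA :: "(nat \<times> nat) set \<Rightarrow> nat \<Rightarrow> nat" where
  "rsA A k = Max (insert 0 (stA A k))"

definition arcs_ok :: "nat \<Rightarrow> (nat \<times> nat) set \<Rightarrow> bool" where
  "arcs_ok n A \<longleftrightarrow> (\<forall>(i,j)\<in>A. 1 \<le> i \<and> i < j \<and> j \<le> n)"

lemma arcs_ok_arcs: "partition_on {1..(n::nat)} P \<Longrightarrow> arcs_ok n (arcs P)"
  unfolding arcs_ok_def using arcsD by blast

lemma has_nesting_stA: "has_nesting P k \<longleftrightarrow> stA (arcs P) k \<noteq> {}"
  by (auto simp: has_nesting_def stA_def is_nesting_nest)

lemma stA_sub:
  assumes "arcs_ok n A" "1 \<le> k"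
  shows "stA A k \<subseteq> {1..n}"
proof
  fix s assume "s \<in> stA A k"
  then obtain xs where xs: "nest A k xs" "s = fst (hd xs)" unfolding stA_def by blast
  then have "xs \<noteq> []" using assms(2) unfolding nest_def by auto
  then have "hd xs \<in> A" using xs(1) unfolding nest_def by auto
  then show "s \<in> {1..n}" using assms(1) xs(2) unfolding arcs_ok_def by (cases "hd xs") fastforce
qed

lemma stA_finite: "arcs_ok n A \<Longrightarrow> 1 \<le> k \<Longrightarrow> finite (stA A k)"
  by (rule finite_subset[OF stA_sub]) simp_all

lemma rsA_le: "arcs_ok n A \<Longrightarrow> 1 \<le> k \<Longrightarrow> rsA A k \<le> n"
proof -
  assume a: "arcs_ok n A" "1 \<le> k"
  have "finite (stA A k)" "\<forall>s\<in>stA A k. s \<le> n" using stA_finite[OF a] stA_sub[OF a] by auto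
  then show ?thesis unfolding rsA_def by simp
qed

lemma rsA_ge: "arcs_ok n A \<Longrightarrow> 1 \<le> k \<Longrightarrow> s \<in> stA A k \<Longrightarrow> s \<le> rsA A k"
  unfolding rsA_def using stA_finite by simp

lemma rsA_in: "arcs_ok n A \<Longrightarrow> 1 \<le> k \<Longrightarrow> 0 < rsA A k \<Longrightarrow> rsA A k \<in> stA A k"
  unfolding rsA_def using stA_finite
  by (metis Max_in finite_insert insertE insert_not_empty less_irrefl)

lemma rsA_empty: "stA A k = {} \<Longrightarrow> rsA A k = 0"
  unfolding rsA_def by simp

lemma stA_arc: 
  assumes "s \<in> stA A k" "1 \<le> k"
  shows "\<exists>t. (s,t) \<in> A"
proof -
  obtain xs where xs: "nest A k xs" "s = fst (hd xs)" using assms(1) unfolding stA_def by blast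
  then have "xs \<noteq> []" using assms(2) unfolding nest_def by auto
  then have "hd xs \<in> A" using xs(1) unfolding nest_def by auto
  then show ?thesis using xs(2) by (metis prod.collapse)
qed

lemma stA_mono_step:
  assumes "s \<in> stA A (Suc k)" "1 \<le> k"
  shows "\<exists>s'\<in>stA A k. s < s'"
proof -
  obtain xs where xs: "nest A (Suc k) xs" "s = fst (hd xs)" using assms(1) unfolding stA_def by blast
  have l: "length xs = Suc k" using xs(1) unfolding nest_def by simp
  then obtain x xs' where e1: "xs = x # xs'" "length xs' = k" by (cases xs) auto
  then obtain y ys where "xs' = y # ys" using assms(2) by (cases xs') auto
  with e1 have e: "xs = x # y # ys" by simp
  have "nest A k (y # ys)" using xs(1) e unfolding nest_def by auto
  then have "fst y \<in> stA A k" unfolding stA_def by force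
  moreover have "s < fst y" using xs e unfolding nest_def by (cases x, cases y) auto
  ultimately show ?thesis by blast
qed

lemma rsA_mono:
  assumes "arcs_ok n A" "1 \<le> k" "0 < rsA A (Suc k)"
  shows "rsA A (Suc k) < rsA A k"
proof -
  have "rsA A (Suc k) \<in> stA A (Suc k)" using rsA_in assms by auto
  then obtain s' where "s' \<in> stA A k" "rsA A (Suc k) < s'" using stA_mono_step assms(2) by blast
  then show ?thesis using rsA_ge[OF assms(1,2)] by fastforce
qed

lemma rsA_mono': 
  assumes "arcs_ok n A" "1 \<le> k"
  shows "rsA A (Suc k) \<le> rsA A k"
  using rsA_mono[OF assms] by fastforce

lemma rsA_antimono:
  assumes "arcs_ok n A" "1 \<le> i" "i \<le> k"
  shows "rsA A k \<le> rsA A i"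
  using assms(3)
proof (induction k rule: dec_induct)
  case base then show ?case by simp
next
  case (step k)
  then show ?case using rsA_mono'[OF assms(1), of k] assms(2) by simp
qed

lemma sorted_nest_hd:
  fixes y z :: "nat \<times> nat"
  assumes "sorted_wrt (\<lambda>(i, j) (i', j'). i < i' \<and> j' < j) (y # ys)" "z \<in> set (y#ys)"
  shows "fst y \<le> fst z"
proof (cases "z = y")
  case False
  then have "z \<in> set ys" using assms(2) by simp
  then have "(\<lambda>(i, j) (i', j'). i < i' \<and> j' < j) y z" using assms(1) by simp
  then show ?thesis by (cases y, cases z) auto
qed simp

lemma nest_insert:
  assumes ok: "arcs_ok n A" and N: "n < N"
  shows "nest (insert (b,N) A) k xs \<longleftrightarrow> nest A k xs \<or>
     (\<exists>ys. xs = (b,N) # ys \<and> 1 \<le> k \<and> nest A (k-1) ys \<and> (ys = [] \<or> b < fst (hd ys)))"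
proof
  assume h: "nest (insert (b,N) A) k xs"
  show "nest A k xs \<or>
     (\<exists>ys. xs = (b,N) # ys \<and> 1 \<le> k \<and> nest A (k-1) ys \<and> (ys = [] \<or> b < fst (hd ys)))"
  proof (cases "(b,N) \<in> set xs")
    case False
    then have "nest A k xs" using h unfolding nest_def by auto
    then show ?thesis by blast
  next
    case True
    then obtain x xs' where e: "xs = x # xs'" by (cases xs) auto
    have sw: "sorted_wrt (\<lambda>(i, j) (i', j'). i < i' \<and> j' < j) (x # xs')" using h e unfolding nest_def by simp
    have xin: "x \<in> insert (b,N) A" using h e unfolding nest_def by auto
    have xeq: "x = (b,N)"
    proof (rule ccontr)
      assume ne: "x \<noteq> (b,N)"
      then have "x \<in> A" using xin by simp
      then have "snd x \<le> n" using ok unfolding arcs_ok_def by auto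
      moreover have "(b,N) \<in> set xs'" using True e ne by simp
      then have "N < snd x" using sw by (cases x) auto
      ultimately show False using N by simp
    qed
    have "(b,N) \<notin> set xs'" using sw xeq by auto
    then have "set xs' \<subseteq> A" using h e unfolding nest_def by auto
    moreover have "sorted_wrt (\<lambda>(i, j) (i', j'). i < i' \<and> j' < j) xs'" using sw by simp
    moreover have "length xs' = k - 1" "1 \<le> k" using h e unfolding nest_def by auto
    moreover have "xs' = [] \<or> b < fst (hd xs')"
      using sw xeq by (cases xs') (auto split: prod.splits)
    ultimately show ?thesis using e xeq unfolding nest_def by blast
  qed
next
  assume h: "nest A k xs \<or>
     (\<exists>ys. xs = (b,N) # ys \<and> 1 \<le> k \<and> nest A (k-1) ys \<and> (ys = [] \<or> b < fst (hd ys)))"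
  show "nest (insert (b,N) A) k xs"
  proof (cases "nest A k xs")
    case True then show ?thesis unfolding nest_def by auto
  next
    case False
    then obtain ys where ys: "xs = (b,N) # ys" "1 \<le> k" "nest A (k-1) ys" "ys = [] \<or> b < fst (hd ys)"
      using h by blast
    have "\<forall>z\<in>set ys. b < fst z \<and> snd z < N"
    proof
      fix z assume z: "z \<in> set ys"
      then obtain y ys' where e: "ys = y # ys'" by (cases ys) auto
      have "fst y \<le> fst z" using sorted_nest_hd[of y ys' z] ys(3) z e unfolding nest_def by simp
      moreover have "z \<in> A" using ys(3) z unfolding nest_def by auto
      then have "snd z \<le> n" using ok unfolding arcs_ok_def by auto
      ultimately show "b < fst z \<and> snd z < N" using ys(4) e N by simp
    qed
    then show ?thesis using ys unfolding nest_def by (auto split: prod.splits)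
  qed
qed

lemma stA_insert:
  assumes ok: "arcs_ok n A" and N: "n < N" and k: "1 \<le> k"
  shows "stA (insert (b,N) A) k = stA A k \<union> (if k = 1 \<or> b < rsA A (k-1) then {b} else {})"
proof -
  have ex: "(\<exists>ys. 1 \<le> k \<and> nest A (k-1) ys \<and> (ys = [] \<or> b < fst (hd ys))) \<longleftrightarrow> (k = 1 \<or> b < rsA A (k-1))"
  proof
    assume "\<exists>ys. 1 \<le> k \<and> nest A (k-1) ys \<and> (ys = [] \<or> b < fst (hd ys))"
    then obtain ys where ys: "nest A (k-1) ys" "ys = [] \<or> b < fst (hd ys)" by blast
    show "k = 1 \<or> b < rsA A (k-1)"
    proof (cases "k = 1")
      case False
      then have "ys \<noteq> []" using ys k unfolding nest_def by auto
      then have "b < fst (hd ys)" using ys by simp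
      moreover have "fst (hd ys) \<in> stA A (k-1)" using ys(1) unfolding stA_def by blast
      then have "fst (hd ys) \<le> rsA A (k-1)" using rsA_ge[OF ok, of "k-1"] False k by simp
      ultimately show ?thesis by simp
    qed simp
  next
    assume h: "k = 1 \<or> b < rsA A (k-1)"
    show "\<exists>ys. 1 \<le> k \<and> nest A (k-1) ys \<and> (ys = [] \<or> b < fst (hd ys))"
    proof (cases "k = 1")
      case True then show ?thesis unfolding nest_def by auto
    next
      case False
      then have "rsA A (k-1) \<in> stA A (k-1)" using rsA_in[OF ok, of "k-1"] h k by simp
      then obtain ys where "nest A (k-1) ys" "rsA A (k-1) = fst (hd ys)" unfolding stA_def by blast
      then show ?thesis using h False k by auto
    qed
  qed
  show ?thesis
  proof (intro equalityI subsetI)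
    fix s assume "s \<in> stA (insert (b,N) A) k"
    then obtain xs where xs: "nest (insert (b,N) A) k xs" "s = fst (hd xs)" unfolding stA_def by blast
    from xs(1)[unfolded nest_insert[OF ok N]] show "s \<in> stA A k \<union> (if k = 1 \<or> b < rsA A (k-1) then {b} else {})"
    proof
      assume "nest A k xs" then show ?thesis using xs(2) unfolding stA_def by blast
    next
      assume "\<exists>ys. xs = (b,N) # ys \<and> 1 \<le> k \<and> nest A (k-1) ys \<and> (ys = [] \<or> b < fst (hd ys))"
      then obtain ys where "xs = (b,N) # ys" "1 \<le> k \<and> nest A (k-1) ys \<and> (ys = [] \<or> b < fst (hd ys))" by blast
      then show ?thesis using ex xs(2) by auto
    qed
  next
    fix s assume s: "s \<in> stA A k \<union> (if k = 1 \<or> b < rsA A (k-1) then {b} else {})"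
    show "s \<in> stA (insert (b,N) A) k"
    proof (cases "s \<in> stA A k")
      case True
      then obtain xs where "nest A k xs" "s = fst (hd xs)" unfolding stA_def by blast
      then show ?thesis unfolding stA_def nest_insert[OF ok N] by blast
    next
      case False
      then have "s = b" "k = 1 \<or> b < rsA A (k-1)" using s by (auto split: if_splits)
      then obtain ys where "1 \<le> k \<and> nest A (k-1) ys \<and> (ys = [] \<or> b < fst (hd ys))" using ex by blast
      then have "nest (insert (b,N) A) k ((b,N)#ys)" unfolding nest_insert[OF ok N] by blast
      then show ?thesis using \<open>s = b\<close> unfolding stA_def by force
    qed
  qed
qed

lemma Max_ins0: "finite (S::nat set) \<Longrightarrow> Max (insert b S) = max b (Max (insert 0 S))"
  by (cases "S = {}") (auto simp: Max_insert max_def)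

lemma rsA_insert:
  assumes ok: "arcs_ok n A" and N: "n < N" and k: "1 \<le> k"
  shows "rsA (insert (b,N) A) k = (if k = 1 \<or> b < rsA A (k-1) then max (rsA A k) b else rsA A k)"
proof -
  have f: "finite (stA A k)" using stA_finite[OF ok k] .
  show ?thesis
  proof (cases "k = 1 \<or> b < rsA A (k-1)")
    case True
    then have "stA (insert (b,N) A) k = insert b (stA A k)" using stA_insert[OF ok N k] by simp
    then have "rsA (insert (b,N) A) k = Max (insert b (insert 0 (stA A k)))"
      unfolding rsA_def by (simp add: insert_commute)
    also have "\<dots> = max b (rsA A k)" unfolding rsA_def using f by (simp add: Max_insert)
    finally show ?thesis using True by (simp add: max.commute)
  next
    case False
    then show ?thesis using stA_insert[OF ok N k] unfolding rsA_def by simp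
  qed
qed



definition cons :: "nat set \<Rightarrow> nat \<Rightarrow> nat \<Rightarrow> bool" where
  "cons B i j \<longleftrightarrow> i \<in> B \<and> j \<in> B \<and> i < j \<and> (\<forall>k\<in>B. \<not> (i < k \<and> k < j))"

lemma arcs_cons: "arcs P = {(i,j). \<exists>B\<in>P. cons B i j}"
  unfolding arcs_def cons_def by simp

lemma cons_single: "\<not> cons {N} i j"
  unfolding cons_def by auto

lemma cons_insert:
  assumes "finite B" "B \<noteq> {}" "\<forall>x\<in>B. x < N"
  shows "cons (insert N B) i j \<longleftrightarrow> cons B i j \<or> (i = Max B \<and> j = N)"
proof
  assume h: "cons (insert N B) i j"
  show "cons B i j \<or> (i = Max B \<and> j = N)"
  proof (cases "j = N")
    case True
    then have iB: "i \<in> B" using h unfolding cons_def by auto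
    have "\<forall>k\<in>B. k \<le> i" using h True assms(3) unfolding cons_def by force
    then have "i = Max B" using iB assms(1) by (metis Max_eqI)
    then show ?thesis using True by simp
  next
    case False
    then have "j \<in> B" using h unfolding cons_def by auto
    then have "j < N" using assms(3) by auto
    then have "i \<in> B" using h unfolding cons_def by auto
    then show ?thesis using h \<open>j \<in> B\<close> unfolding cons_def by auto
  qed
next
  assume h: "cons B i j \<or> (i = Max B \<and> j = N)"
  show "cons (insert N B) i j"
  proof (cases "cons B i j")
    case True
    then have "j < N" using assms(3) unfolding cons_def by auto
    then show ?thesis using True unfolding cons_def by auto
  next
    case False
    then have e: "i = Max B" "j = N" using h by auto
    have "Max B \<in> B" using assms(1,2) by simp
    then have "Max B < N" using assms(3) by auto
    moreover have "\<forall>k\<in>B. k \<le> Max B" using assms(1) by simp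
    ultimately show ?thesis using e \<open>Max B \<in> B\<close> unfolding cons_def by force
  qed
qed

lemma notin_Union:
  assumes "partition_on {1..(n::nat)} Q" shows "Suc n \<notin> \<Union>Q"
  using po_union[OF assms] by simp

lemma arcs_add1:
  assumes "partition_on {1..(n::nat)} Q"
  shows "arcs (insert {Suc n} Q) = arcs Q"
  unfolding arcs_cons using cons_single by auto

lemma arcs_att:
  assumes Q: "partition_on {1..(n::nat)} Q" and B: "B \<in> Q"
  shows "arcs (insert (insert (Suc n) B) (Q - {B})) = insert (Max B, Suc n) (arcs Q)"
proof -
  have ci: "cons (insert (Suc n) B) i j \<longleftrightarrow> cons B i j \<or> (i = Max B \<and> j = Suc n)" for i j
    using cons_insert[of B "Suc n"] po_block[OF Q B] by fastforce
  show ?thesis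
    unfolding arcs_cons using ci B by blast
qed

lemma part_add1:
  assumes Q: "partition_on {1..(n::nat)} Q"
  shows "partition_on {1..Suc n} (insert {Suc n} Q)"
proof -
  have d: "disjnt {Suc n} (\<Union>Q)" using notin_Union[OF Q] by (simp add: disjnt_def)
  have e: "{1..Suc n} - {Suc n} = {1..n}" by auto
  show ?thesis using partition_on_insert[OF d, of "{1..Suc n}"] Q e by simp
qed

lemma part_remove:
  assumes Q: "partition_on X Q" and B: "B \<in> Q"
  shows "partition_on (X - B) (Q - {B})"
proof -
  have e: "Q = insert B (Q - {B})" using B by auto
  have "disjnt B (\<Union>(Q - {B}))" using Q B unfolding partition_on_def disjoint_def disjnt_def by blast
  then show ?thesis using partition_on_insert[of B "Q - {B}" X] Q e by simp
qed

lemma part_att: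
  assumes Q: "partition_on {1..(n::nat)} Q" and B: "B \<in> Q"
  shows "partition_on {1..Suc n} (insert (insert (Suc n) B) (Q - {B}))"
proof -
  have r: "partition_on ({1..n} - B) (Q - {B})" using part_remove[OF Q B] .
  have d: "disjnt (insert (Suc n) B) (\<Union>(Q - {B}))"
    using Q B notin_Union[OF Q] unfolding partition_on_def disjoint_def disjnt_def by blast
  have e: "{1..Suc n} - insert (Suc n) B = {1..n} - B" by auto
  have s: "insert (Suc n) B \<subseteq> {1..Suc n}" using po_block(3)[OF Q B] by auto
  show ?thesis using partition_on_insert[OF d, of "{1..Suc n}"] r e s by simp
qed

definition cnt :: "nat set set \<Rightarrow> nat \<Rightarrow> nat" where
  "cnt P x = card {B\<in>P. x < Max B}"

lemma cnt_add1:
  assumes Q: "partition_on {1..(n::nat)} Q" and x: "x \<le> n"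
  shows "cnt (insert {Suc n} Q) x = Suc (cnt Q x)"
proof -
  have "{B\<in>insert {Suc n} Q. x < Max B} = insert {Suc n} {B\<in>Q. x < Max B}" using x by auto
  moreover have "{Suc n} \<notin> Q" using notin_Union[OF Q] by auto
  moreover have "finite {B\<in>Q. x < Max B}" using po_finite[OF Q] by simp
  ultimately show ?thesis unfolding cnt_def by simp
qed

lemma cnt_att:
  assumes Q: "partition_on {1..(n::nat)} Q" and B: "B \<in> Q" and x: "x \<le> n"
  shows "cnt (insert (insert (Suc n) B) (Q - {B})) x + (if x < Max B then 1 else 0) = Suc (cnt Q x)"
proof -
  have fB: "finite B" using po_block[OF Q B] by simp
  have mb: "Max B \<le> n" using po_Max(3)[OF Q B] .
  have "Max (insert (Suc n) B) = max (Suc n) (Max B)"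
    using fB po_block(2)[OF Q B] by (rule Max_insert)
  then have M: "Max (insert (Suc n) B) = Suc n" using mb by (simp add: max_def del: Max_le_iff)
  have f: "finite {C\<in>Q - {B}. x < Max C}" using po_finite[OF Q] by simp
  have ni: "insert (Suc n) B \<notin> Q - {B}" using notin_Union[OF Q] by auto
  have "{C\<in>insert (insert (Suc n) B) (Q - {B}). x < Max C} = insert (insert (Suc n) B) {C\<in>Q - {B}. x < Max C}"
    using x M by auto
  then have 1: "cnt (insert (insert (Suc n) B) (Q - {B})) x = Suc (card {C\<in>Q - {B}. x < Max C})"
    unfolding cnt_def using f ni by simp
  have 2: "cnt Q x = card {C\<in>Q - {B}. x < Max C} + (if x < Max B then 1 else 0)"
  proof (cases "x < Max B")
    case True
    then have "{C\<in>Q. x < Max C} = insert B {C\<in>Q - {B}. x < Max C}" using B by auto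
    then show ?thesis unfolding cnt_def using f True by simp
  next
    case False
    then have "{C\<in>Q. x < Max C} = {C\<in>Q - {B}. x < Max C}" using B by auto
    then show ?thesis unfolding cnt_def using False by simp
  qed
  show ?thesis using 1 2 by simp
qed

definition rs :: "nat set set \<Rightarrow> nat \<Rightarrow> nat" where
  "rs P k = rsA (arcs P) k"

lemma label_cnt:
  assumes Q: "partition_on {1..(n::nat)} Q" and k: "1 \<le> k"
  shows "label Q k = Suc (cnt Q (rs Q k))"
proof (cases "has_nesting Q k")
  case True
  have ok: "arcs_ok n (arcs Q)" using arcs_ok_arcs[OF Q] .
  have ne: "stA (arcs Q) k \<noteq> {}" using True has_nesting_stA by blast
  have "rightmost_start Q k = Max (stA (arcs Q) k)"
    unfolding rightmost_start_def stA_def is_nesting_nest by simp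
  also have "\<dots> = rs Q k" unfolding rs_def rsA_def using ne stA_finite[OF ok k] by (simp add: Max_insert)
  finally show ?thesis using True unfolding label_def cnt_def by simp
next
  case False
  then have "rs Q k = 0" unfolding rs_def using has_nesting_stA rsA_empty by blast
  moreover have "{B\<in>Q. 0 < Max B} = Q" using po_Max(2)[OF Q] by fastforce
  ultimately show ?thesis using False unfolding label_def cnt_def by simp
qed

lemma rs_not_Max:
  assumes Q: "partition_on {1..(n::nat)} Q" and k: "1 \<le> k" and B: "B \<in> Q"
  shows "rs Q k \<noteq> Max B"
proof (cases "rs Q k = 0")
  case True then show ?thesis using po_Max(2)[OF Q B] by simp
next
  case False
  have ok: "arcs_ok n (arcs Q)" using arcs_ok_arcs[OF Q] .
  have "rs Q k \<in> stA (arcs Q) k" using rsA_in[OF ok k] False unfolding rs_def by simp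
  then obtain t where "(rs Q k, t) \<in> arcs Q" using stA_arc k by blast
  then show ?thesis using arcs_start_not_Max[OF Q _ B] by blast
qed



abbreviation add1 :: "nat \<Rightarrow> nat set set \<Rightarrow> nat set set" where
  "add1 n Q \<equiv> insert {Suc n} Q"

abbreviation att :: "nat \<Rightarrow> nat set set \<Rightarrow> nat set \<Rightarrow> nat set set" where
  "att n Q B \<equiv> insert (insert (Suc n) B) (Q - {B})"

lemma PiD: "Q \<in> Pi_m m n \<Longrightarrow> partition_on {1..n} Q \<and> stA (arcs Q) (Suc m) = {}"
  unfolding Pi_m_def set_partitions_def using has_nesting_stA by blast

lemma PiI: "partition_on {1..n} Q \<Longrightarrow> stA (arcs Q) (Suc m) = {} \<Longrightarrow> Q \<in> Pi_m m n"
  unfolding Pi_m_def set_partitions_def using has_nesting_stA by blast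

lemma rs_add1: "partition_on {1..(n::nat)} Q \<Longrightarrow> rs (add1 n Q) k = rs Q k"
  unfolding rs_def using arcs_add1 by simp

lemma rs_att:
  assumes Q: "partition_on {1..(n::nat)} Q" and B: "B \<in> Q" and k: "1 \<le> k"
  shows "rs (att n Q B) k = (if k = 1 \<or> Max B < rs Q (k-1) then max (rs Q k) (Max B) else rs Q k)"
  unfolding rs_def arcs_att[OF Q B] using rsA_insert[OF arcs_ok_arcs[OF Q], of "Suc n" k "Max B"] k by simp

lemma add1_Pi: "Q \<in> Pi_m m n \<Longrightarrow> add1 n Q \<in> Pi_m m (Suc n)"
  using PiD[of Q m n] PiI[of "Suc n" "add1 n Q" m] part_add1 arcs_add1 by metis

lemma att_Pi:
  assumes Q: "Q \<in> Pi_m m n" and m: "1 \<le> m" and B: "B \<in> Q"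
  shows "att n Q B \<in> Pi_m m (Suc n) \<longleftrightarrow> rs Q m < Max B"
proof -
  have P: "partition_on {1..n} Q" and e: "stA (arcs Q) (Suc m) = {}" using PiD[OF Q] by auto
  have "stA (arcs (att n Q B)) (Suc m) = (if Max B < rs Q m then {Max B} else {})"
    unfolding arcs_att[OF P B] rs_def using stA_insert[OF arcs_ok_arcs[OF P], of "Suc n" "Suc m" "Max B"] e m
    by simp
  moreover have "rs Q m \<noteq> Max B" using rs_not_Max[OF P m B] .
  ultimately show ?thesis using PiD[of "att n Q B" m "Suc n"] PiI[OF part_att[OF P B], of m] by (auto split: if_splits)
qed

lemma label_add1:
  assumes Q: "partition_on {1..(n::nat)} Q" and k: "1 \<le> k"
  shows "label (add1 n Q) k = Suc (label Q k)"
proof -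
  have "rs Q k \<le> n" unfolding rs_def using rsA_le[OF arcs_ok_arcs[OF Q] k] .
  then show ?thesis
    using label_cnt[OF Q k] label_cnt[OF part_add1[OF Q] k] rs_add1[OF Q] cnt_add1[OF Q] by simp
qed

lemma rs_antimono:
  assumes Q: "partition_on {1..(n::nat)} Q" and "1 \<le> i" "i \<le> k"
  shows "rs Q k \<le> rs Q i"
  unfolding rs_def using rsA_antimono[OF arcs_ok_arcs[OF Q]] assms by blast

lemma label_att:
  assumes Q: "partition_on {1..(n::nat)} Q" and B: "B \<in> Q" and k: "1 \<le> k"
    and j: "1 \<le> j" "rs Q j < Max B" "j = 1 \<or> Max B < rs Q (j-1)"
  shows "label (att n Q B) k = (if k < j then Suc (label Q k) else if k = j then cnt Q (Max B) + 2 else label Q k)"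
proof -
  let ?b = "Max B"
  have bn: "?b \<le> n" using po_Max(3)[OF Q B] .
  have Lk: "label (att n Q B) k = Suc (cnt (att n Q B) (rs (att n Q B) k))"
    using label_cnt[OF part_att[OF Q B] k] .
  have Lq: "label Q k = Suc (cnt Q (rs Q k))" using label_cnt[OF Q k] .
  have rsn: "rs Q k \<le> n" unfolding rs_def using rsA_le[OF arcs_ok_arcs[OF Q] k] .
  show ?thesis
  proof (cases "k < j")
    case True
    then have j2: "j \<noteq> 1" using k by simp
    then have "?b < rs Q (j-1)" using j by simp
    moreover have "rs Q (j-1) \<le> rs Q k" using rs_antimono[OF Q k] True by simp
    ultimately have gt: "?b < rs Q k" by simp
    have "rs (att n Q B) k = rs Q k"
      using rs_att[OF Q B k] gt by (auto simp: max_def)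
    then show ?thesis using Lk Lq cnt_att[OF Q B rsn] gt True by simp
  next
    case False
    show ?thesis
    proof (cases "k = j")
      case True
      have "rs (att n Q B) k = ?b" using rs_att[OF Q B k] True j by (auto simp: max_def)
      then show ?thesis using Lk cnt_att[OF Q B bn] True by simp
    next
      case False2: False
      then have kj: "j < k" using False by simp
      have "rs Q (k-1) \<le> rs Q j" using rs_antimono[OF Q j(1)] kj by simp
      then have c: "\<not> (k = 1 \<or> ?b < rs Q (k-1))" using kj j by simp
      have "rs Q k \<le> rs Q j" using rs_antimono[OF Q j(1)] kj by simp
      then have lt: "rs Q k < ?b" using j by simp
      have "rs (att n Q B) k = rs Q k" using rs_att[OF Q B k] c by simp
      then show ?thesis using Lk Lq cnt_att[OF Q B rsn] lt kj by simp
    qed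
  qed
qed



definition Att :: "nat \<Rightarrow> nat set set \<Rightarrow> nat set set" where
  "Att m Q = {B\<in>Q. rs Q m < Max B}"

definition child :: "nat \<Rightarrow> nat set set \<Rightarrow> nat set option \<Rightarrow> nat set set" where
  "child n Q c = (case c of None \<Rightarrow> add1 n Q | Some B \<Rightarrow> att n Q B)"

definition Ch :: "nat \<Rightarrow> nat set set \<Rightarrow> nat set option set" where
  "Ch m Q = insert None (Some ` Att m Q)"

definition par :: "nat \<Rightarrow> nat set set \<Rightarrow> nat set set" where
  "par n P = (\<lambda>B. B - {Suc n}) ` P - {{}}"

lemma par_add1:
  assumes Q: "partition_on {1..(n::nat)} Q"
  shows "par n (add1 n Q) = Q"
proof -
  have "\<forall>B\<in>Q. B - {Suc n} = B" using notin_Union[OF Q] by auto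
  then have "(\<lambda>B. B - {Suc n}) ` Q = id ` Q" by (intro image_cong) auto
  then have "(\<lambda>B. B - {Suc n}) ` Q = Q" by simp
  moreover have "{} \<notin> Q" using Q unfolding partition_on_def by simp
  ultimately show ?thesis unfolding par_def by auto
qed

lemma par_att:
  assumes Q: "partition_on {1..(n::nat)} Q" and B: "B \<in> Q"
  shows "par n (att n Q B) = Q"
proof -
  have s: "\<forall>C\<in>Q. C - {Suc n} = C" using notin_Union[OF Q] by auto
  then have "(\<lambda>C. C - {Suc n}) ` (Q - {B}) = id ` (Q - {B})" by (intro image_cong) auto
  then have "(\<lambda>C. C - {Suc n}) ` (Q - {B}) = Q - {B}" by simp
  moreover have "insert (Suc n) B - {Suc n} = B" using s B by auto
  moreover have "{} \<notin> Q" using Q unfolding partition_on_def by simp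
  ultimately show ?thesis unfolding par_def using B by auto
qed

lemma child_inj:
  assumes m: "1 \<le> m"
  shows "inj_on (\<lambda>(Q,c). child n Q c) (SIGMA Q:Pi_m m n. Ch m Q)"
proof (rule inj_onI)
  fix x y
  assume x: "x \<in> (SIGMA Q:Pi_m m n. Ch m Q)" and y: "y \<in> (SIGMA Q:Pi_m m n. Ch m Q)"
    and xy: "(\<lambda>(Q,c). child n Q c) x = (\<lambda>(Q,c). child n Q c) y"
  obtain Q c where xe: "x = (Q,c)" by (cases x)
  obtain Q' c' where ye: "y = (Q',c')" by (cases y)
  have a: "Q \<in> Pi_m m n" "c \<in> Ch m Q" "Q' \<in> Pi_m m n" "c' \<in> Ch m Q'" "child n Q c = child n Q' c'"
    using x y xy xe ye by auto
  have P: "partition_on {1..n} Q" "partition_on {1..n} Q'" using PiD a by auto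
  have pc: "par n (child n Q c) = Q" if "partition_on {1..n} Q" "c \<in> Ch m Q" for Q c
    using that par_add1 par_att unfolding child_def Ch_def Att_def by auto
  have QQ: "Q = Q'" using pc[OF P(1) a(2)] pc[OF P(2) a(4)] a(5) by simp
  have nU: "Suc n \<notin> \<Union>Q" using notin_Union[OF P(1)] .
  have ne: "\<And>B. B \<in> Q \<Longrightarrow> B \<noteq> {}" using P(1) unfolding partition_on_def by auto
  have "c = c'"
  proof (cases c)
    case None
    show ?thesis
    proof (cases c')
      case (Some B')
      then have B': "B' \<in> Q" using a(4) QQ unfolding Ch_def Att_def by auto
      have "{Suc n} \<in> att n Q B'" using a(5) None Some QQ unfolding child_def by auto
      then have "{Suc n} = insert (Suc n) B' \<or> {Suc n} \<in> Q" by auto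
      then show ?thesis using nU ne[OF B'] B' by blast
    qed (simp add: None)
  next
    case (Some B)
    then have B: "B \<in> Q" using a(2) unfolding Ch_def Att_def by auto
    show ?thesis
    proof (cases c')
      case None
      have "{Suc n} \<in> att n Q B" using a(5) None Some QQ unfolding child_def by auto
      then have "{Suc n} = insert (Suc n) B \<or> {Suc n} \<in> Q" by auto
      then show ?thesis using nU ne[OF B] B by blast
    next
      case (Some B')
      then have B': "B' \<in> Q" using a(4) QQ unfolding Ch_def Att_def by auto
      have "insert (Suc n) B \<in> att n Q B'" using a(5) \<open>c = Some B\<close> Some QQ unfolding child_def by auto
      then have "insert (Suc n) B = insert (Suc n) B' \<or> insert (Suc n) B \<in> Q" by auto
      then have "insert (Suc n) B = insert (Suc n) B'" using nU by auto
      then have "B = B'" using nU B B' by (metis Diff_insert_absorb UnionI)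
      then show ?thesis using \<open>c = Some B\<close> Some by simp
    qed
  qed
  then show "x = y" using QQ xe ye by simp
qed

lemma child_in:
  assumes m: "1 \<le> m" and Q: "Q \<in> Pi_m m n" and c: "c \<in> Ch m Q"
  shows "child n Q c \<in> Pi_m m (Suc n)"
  using c add1_Pi[OF Q] att_Pi[OF Q m] unfolding Ch_def Att_def child_def by auto

lemma child_surj:
  assumes m: "1 \<le> m" and P: "P \<in> Pi_m m (Suc n)"
  shows "\<exists>Q c. Q \<in> Pi_m m n \<and> c \<in> Ch m Q \<and> P = child n Q c"
proof -
  have PP: "partition_on {1..Suc n} P" and eP: "stA (arcs P) (Suc m) = {}" using PiD[OF P] by auto
  have "Suc n \<in> \<Union>P" using po_union[OF PP] by simp
  then obtain B0 where B0: "B0 \<in> P" "Suc n \<in> B0" by blast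
  have e0: "P = insert B0 (P - {B0})" using B0 by auto
  have d0: "disjnt B0 (\<Union>(P - {B0}))" using PP B0 unfolding partition_on_def disjoint_def disjnt_def by blast
  have r0: "partition_on ({1..Suc n} - B0) (P - {B0})" using part_remove[OF PP B0(1)] .
  show ?thesis
  proof (cases "B0 = {Suc n}")
    case True
    let ?Q = "P - {B0}"
    have "{1..Suc n} - B0 = {1..n}" using True by auto
    then have Qp: "partition_on {1..n} ?Q" using r0 by simp
    have eq: "P = add1 n ?Q" using True e0 by simp
    have "arcs P = arcs ?Q" using arcs_add1[OF Qp] eq by simp
    then have "?Q \<in> Pi_m m n" using PiI[OF Qp] eP by simp
    moreover have "None \<in> Ch m ?Q" unfolding Ch_def by simp
    ultimately show ?thesis using eq unfolding child_def by fastforce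
  next
    case False
    let ?B = "B0 - {Suc n}"
    let ?Q = "insert ?B (P - {B0})"
    have Bne: "?B \<noteq> {}" using False B0(2) by auto
    have B0s: "B0 \<subseteq> {1..Suc n}" using po_block(3)[OF PP B0(1)] .
    have d: "disjnt ?B (\<Union>(P - {B0}))" using d0 by (auto simp: disjnt_def)
    have "{1..n} - ?B = {1..Suc n} - B0" using B0s B0(2) by (auto simp: le_Suc_eq)
    moreover have "?B \<subseteq> {1..n}" using B0s by auto
    ultimately have Qp: "partition_on {1..n} ?Q"
      using partition_on_insert[OF d, of "{1..n}"] r0 Bne by simp
    have BQ: "?B \<in> ?Q" by simp
    have nin: "?B \<notin> P - {B0}"
    proof
      assume h: "?B \<in> P - {B0}"
      have dj: "disjoint P" using PP unfolding partition_on_def by simp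
      have "?B \<in> P" "?B \<noteq> B0" using h by auto
      then have "?B \<inter> B0 = {}" using disjointD[OF dj] B0(1) by blast
      then show False using Bne by auto
    qed
    have "?Q - {?B} = P - {B0}" using nin by auto
    moreover have "insert (Suc n) ?B = B0" using B0(2) by auto
    ultimately have eq: "P = att n ?Q ?B" using e0 by simp
    have "arcs P = insert (Max ?B, Suc n) (arcs ?Q)" using arcs_att[OF Qp BQ] eq by simp
    then have "stA (arcs ?Q) (Suc m) = {}"
      using stA_insert[OF arcs_ok_arcs[OF Qp], of "Suc n" "Suc m" "Max ?B"] eP by simp
    then have QPi: "?Q \<in> Pi_m m n" using PiI[OF Qp] by simp
    have "rs ?Q m < Max ?B" using att_Pi[OF QPi m BQ] eq P by simp
    then have "Some ?B \<in> Ch m ?Q" unfolding Ch_def Att_def by simp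
    then show ?thesis using QPi eq unfolding child_def by fastforce
  qed
qed

lemma decomp:
  assumes m: "1 \<le> m"
  shows "Pi_m m (Suc n) = (\<lambda>(Q,c). child n Q c) ` (SIGMA Q:Pi_m m n. Ch m Q)"
  using child_in[OF m] child_surj[OF m] by fastforce

lemma finite_Ch: "Q \<in> Pi_m m n \<Longrightarrow> finite (Ch m Q)"
proof -
  assume "Q \<in> Pi_m m n"
  then have "finite Q" using po_finite PiD by blast
  then show ?thesis unfolding Ch_def Att_def by simp
qed

lemma sum_decomp:
  assumes m: "1 \<le> m"
  shows "(\<Sum>P\<in>Pi_m m (Suc n). f P) = (\<Sum>Q\<in>Pi_m m n. \<Sum>c\<in>Ch m Q. f (child n Q c))"
proof -
  have "(\<Sum>P\<in>Pi_m m (Suc n). f P) = (\<Sum>x\<in>(SIGMA Q:Pi_m m n. Ch m Q). f ((\<lambda>(Q,c). child n Q c) x))"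
    unfolding decomp[OF m] by (rule sum.reindex[OF child_inj[OF m], unfolded comp_def])
  also have "\<dots> = (\<Sum>(Q,c)\<in>(SIGMA Q:Pi_m m n. Ch m Q). f (child n Q c))"
    by (simp add: case_prod_unfold)
  also have "\<dots> = (\<Sum>Q\<in>Pi_m m n. \<Sum>c\<in>Ch m Q. f (child n Q c))"
    using finite_Pi finite_Ch by (subst sum.Sigma) auto
  finally show ?thesis .
qed

lemma sum_Ch:
  assumes Q: "Q \<in> Pi_m m n"
  shows "(\<Sum>c\<in>Ch m Q. f (child n Q c)) = f (add1 n Q) + (\<Sum>B\<in>Att m Q. f (att n Q B))"
proof -
  have "finite Q" using po_finite PiD[OF Q] by blast
  then have "finite (Att m Q)" unfolding Att_def by simp
  then show ?thesis unfolding Ch_def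
    by (simp add: sum.reindex child_def)
qed



definition ub :: "nat \<Rightarrow> nat set set \<Rightarrow> nat \<Rightarrow> nat" where
  "ub n Q j = (if j = 1 then Suc n else rs Q (j-1))"

definition G :: "nat \<Rightarrow> nat set set \<Rightarrow> nat \<Rightarrow> nat set set" where
  "G n Q j = {B\<in>Q. rs Q j < Max B \<and> Max B < ub n Q j}"

lemma Att_union:
  assumes Q: "partition_on {1..(n::nat)} Q" and m: "1 \<le> m"
  shows "Att m Q = (\<Union>j\<in>{1..m}. G n Q j)"
proof (intro equalityI subsetI)
  fix B assume "B \<in> Att m Q"
  then have B: "B \<in> Q" "rs Q m < Max B" unfolding Att_def by auto
  define j where "j = (LEAST j. 1 \<le> j \<and> rs Q j < Max B)"
  have ex: "1 \<le> m \<and> rs Q m < Max B" using B m by simp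
  have j: "1 \<le> j" "rs Q j < Max B" using LeastI[of "\<lambda>j. 1 \<le> j \<and> rs Q j < Max B", OF ex] unfolding j_def by auto
  have jm: "j \<le> m" using Least_le[of "\<lambda>j. 1 \<le> j \<and> rs Q j < Max B", OF ex] unfolding j_def by simp
  have "Max B < ub n Q j"
  proof (cases "j = 1")
    case True then show ?thesis unfolding ub_def using po_Max(3)[OF Q B(1)] by simp
  next
    case False
    then have "\<not> (1 \<le> j - 1 \<and> rs Q (j-1) < Max B)"
      using not_less_Least[of "j-1" "\<lambda>j. 1 \<le> j \<and> rs Q j < Max B"] j(1) unfolding j_def by fastforce
    moreover have "1 \<le> j - 1" using False j(1) by linarith
    ultimately have "Max B \<le> rs Q (j-1)" by simp
    moreover have "rs Q (j-1) \<noteq> Max B" using rs_not_Max[OF Q _ B(1), of "j-1"] False j(1) by simp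
    ultimately show ?thesis unfolding ub_def using False by simp
  qed
  then have "B \<in> G n Q j" unfolding G_def using B j by simp
  then show "B \<in> (\<Union>j\<in>{1..m}. G n Q j)" using j jm by auto
next
  fix B assume "B \<in> (\<Union>j\<in>{1..m}. G n Q j)"
  then obtain j where j: "j \<in> {1..m}" "B \<in> G n Q j" by blast
  then have "rs Q m \<le> rs Q j" using rs_antimono[OF Q] by simp
  then show "B \<in> Att m Q" using j unfolding G_def Att_def by auto
qed

lemma G_disj:
  assumes Q: "partition_on {1..(n::nat)} Q" and j: "1 \<le> j" "j < j'"
  shows "G n Q j \<inter> G n Q j' = {}"
proof -
  have "rs Q (j'-1) \<le> rs Q j" using rs_antimono[OF Q j(1)] j by simp
  moreover have "j' \<noteq> 1" using j by simp
  ultimately show ?thesis unfolding G_def ub_def by auto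
qed

lemma cnt_strict:
  assumes Q: "partition_on {1..(n::nat)} Q" and B: "B \<in> Q" and x: "x < Max B"
  shows "cnt Q (Max B) < cnt Q x"
proof -
  have f: "finite Q" using po_finite[OF Q] .
  have "{C\<in>Q. Max B < Max C} \<subset> {C\<in>Q. x < Max C}" using B x by auto
  then show ?thesis unfolding cnt_def using f by (intro psubset_card_mono) auto
qed

lemma cnt_mono:
  assumes Q: "partition_on {1..(n::nat)} Q" and "x \<le> y"
  shows "cnt Q y \<le> cnt Q x"
proof -
  have f: "finite Q" using po_finite[OF Q] .
  have "{C\<in>Q. y < Max C} \<subseteq> {C\<in>Q. x < Max C}" using assms(2) by auto
  then show ?thesis unfolding cnt_def using f by (intro card_mono) auto
qed

lemma G_bij:
  assumes Q: "partition_on {1..(n::nat)} Q" and xy: "x \<le> y" and ny: "\<forall>B\<in>Q. Max B \<noteq> y"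
  shows "bij_betw (\<lambda>B. cnt Q (Max B)) {B\<in>Q. x < Max B \<and> Max B < y} {cnt Q y..<cnt Q x}"
proof -
  let ?G = "{B\<in>Q. x < Max B \<and> Max B < y}"
  let ?f = "\<lambda>B. cnt Q (Max B)"
  have f: "finite Q" using po_finite[OF Q] .
  have inj: "inj_on ?f ?G"
  proof (rule inj_onI)
    fix B B' assume a: "B \<in> ?G" "B' \<in> ?G" "?f B = ?f B'"
    have "Max B = Max B'"
    proof (rule ccontr)
      assume "Max B \<noteq> Max B'"
      then consider "Max B < Max B'" | "Max B' < Max B" by linarith
      then show False
      proof cases
        case 1 then show False using cnt_strict[OF Q, of B' "Max B"] a by simp
      next
        case 2 then show False using cnt_strict[OF Q, of B "Max B'"] a by simp
      qed
    qed
    then show "B = B'" using po_disj[OF Q _ _ po_Max(1)[OF Q]] po_Max(1)[OF Q] a by (metis (no_types, lifting) mem_Collect_eq)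
  qed
  have sub: "?f ` ?G \<subseteq> {cnt Q y..<cnt Q x}"
  proof
    fix t assume "t \<in> ?f ` ?G"
    then obtain B where B: "B \<in> ?G" "t = ?f B" by blast
    have "cnt Q y \<le> t" using cnt_mono[OF Q, of "Max B" y] B by simp
    moreover have "t < cnt Q x" using cnt_strict[OF Q, of B x] B by simp
    ultimately show "t \<in> {cnt Q y..<cnt Q x}" by simp
  qed
  have "{C\<in>Q. x < Max C} = {C\<in>Q. y < Max C} \<union> ?G" using xy ny by fastforce
  moreover have "{C\<in>Q. y < Max C} \<inter> ?G = {}" by auto
  ultimately have "cnt Q x = cnt Q y + card ?G" unfolding cnt_def using f
    by (simp add: card_Un_disjoint)
  then have "card (?f ` ?G) = card {cnt Q y..<cnt Q x}" using card_image[OF inj] by simp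
  then have "?f ` ?G = {cnt Q y..<cnt Q x}" using sub by (intro card_subset_eq) auto
  then show ?thesis using inj unfolding bij_betw_def by simp
qed

definition wt :: "nat \<Rightarrow> (nat \<Rightarrow> real) \<Rightarrow> nat set set \<Rightarrow> real" where
  "wt m v P = (\<Prod>k=1..m. v k ^ label P k)"

definition Cj :: "nat \<Rightarrow> (nat \<Rightarrow> real) \<Rightarrow> nat set set \<Rightarrow> nat \<Rightarrow> real" where
  "Cj m u Q j = (\<Prod>k\<in>{1..m}-{j}. u k ^ (if k < j then Suc (label Q k) else label Q k))"

lemma wt_att:
  assumes Q: "partition_on {1..(n::nat)} Q" and j: "j \<in> {1..m}" and B: "B \<in> G n Q j"
  shows "wt m u (att n Q B) = Cj m u Q j * u j ^ (cnt Q (Max B) + 2)"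
proof -
  have BQ: "B \<in> Q" and c: "rs Q j < Max B" "j = 1 \<or> Max B < rs Q (j-1)"
    using B unfolding G_def ub_def by (auto split: if_splits)
  have L: "\<And>k. k \<in> {1..m} \<Longrightarrow> label (att n Q B) k =
     (if k < j then Suc (label Q k) else if k = j then cnt Q (Max B) + 2 else label Q k)"
    using label_att[OF Q BQ _ _ c] j by simp
  have "wt m u (att n Q B) = u j ^ label (att n Q B) j * (\<Prod>k\<in>{1..m}-{j}. u k ^ label (att n Q B) k)"
    unfolding wt_def using j by (simp add: prod.remove)
  also have "(\<Prod>k\<in>{1..m}-{j}. u k ^ label (att n Q B) k) = Cj m u Q j"
    unfolding Cj_def by (rule prod.cong) (auto simp: L)
  finally show ?thesis using L[OF j] by simp
qed

lemma sum_G: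
  assumes Q: "partition_on {1..(n::nat)} Q" and j: "j \<in> {1..m}"
  shows "(\<Sum>B\<in>G n Q j. wt m u (att n Q B)) =
     Cj m u Q j * (\<Sum>t\<in>{cnt Q (ub n Q j)..<cnt Q (rs Q j)}. u j ^ (t + 2))"
proof -
  have xy: "rs Q j \<le> ub n Q j"
  proof (cases "j = 1")
    case True then show ?thesis unfolding ub_def rs_def using rsA_le[OF arcs_ok_arcs[OF Q], of j] by simp
  next
    case False
    then have "1 \<le> j - 1" using j by auto
    then show ?thesis unfolding ub_def using rs_antimono[OF Q, of "j-1" j] False by simp
  qed
  have ny: "\<forall>B\<in>Q. Max B \<noteq> ub n Q j"
  proof
    fix B assume B: "B \<in> Q"
    show "Max B \<noteq> ub n Q j"
    proof (cases "j = 1")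
      case True then show ?thesis unfolding ub_def using po_Max(3)[OF Q B] by simp
    next
      case False
      then have "1 \<le> j - 1" using j by auto
      then show ?thesis unfolding ub_def using rs_not_Max[OF Q _ B, of "j-1"] False by auto
    qed
  qed
  have bij: "bij_betw (\<lambda>B. cnt Q (Max B)) (G n Q j) {cnt Q (ub n Q j)..<cnt Q (rs Q j)}"
    using G_bij[OF Q xy ny] unfolding G_def .
  have "(\<Sum>B\<in>G n Q j. wt m u (att n Q B)) = (\<Sum>B\<in>G n Q j. Cj m u Q j * u j ^ (cnt Q (Max B) + 2))"
    using wt_att[OF Q j] by simp
  also have "\<dots> = Cj m u Q j * (\<Sum>B\<in>G n Q j. u j ^ (cnt Q (Max B) + 2))"
    by (simp add: sum_distrib_left)
  also have "(\<Sum>B\<in>G n Q j. u j ^ (cnt Q (Max B) + 2)) = (\<Sum>t\<in>{cnt Q (ub n Q j)..<cnt Q (rs Q j)}. u j ^ (t + 2))"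
    using sum.reindex_bij_betw[OF bij, of "\<lambda>t. u j ^ (t + 2)"] by simp
  finally show ?thesis .
qed

lemma sum_Att:
  assumes Q: "partition_on {1..(n::nat)} Q" and m: "1 \<le> m"
  shows "(\<Sum>B\<in>Att m Q. wt m u (att n Q B)) =
    (\<Sum>j\<in>{1..m}. Cj m u Q j * (\<Sum>t\<in>{cnt Q (ub n Q j)..<cnt Q (rs Q j)}. u j ^ (t + 2)))"
proof -
  have f: "finite Q" using po_finite[OF Q] .
  have "(\<Sum>B\<in>Att m Q. wt m u (att n Q B)) = (\<Sum>j\<in>{1..m}. \<Sum>B\<in>G n Q j. wt m u (att n Q B))"
    unfolding Att_union[OF Q m]
  proof (rule sum.UNION_disjoint)
    show "\<forall>j\<in>{1..m}. finite (G n Q j)" unfolding G_def using f by simp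
    show "\<forall>i\<in>{1..m}. \<forall>j\<in>{1..m}. i \<noteq> j \<longrightarrow> G n Q i \<inter> G n Q j = {}"
    proof (intro ballI impI)
      fix i j assume "i \<in> {1..m}" "j \<in> {1..m}" "i \<noteq> j"
      then show "G n Q i \<inter> G n Q j = {}"
        using G_disj[OF Q, of i j] G_disj[OF Q, of j i] by (cases "i < j") auto
    qed
  qed simp
  also have "\<dots> = (\<Sum>j\<in>{1..m}. Cj m u Q j * (\<Sum>t\<in>{cnt Q (ub n Q j)..<cnt Q (rs Q j)}. u j ^ (t + 2)))"
    using sum_G[OF Q] by simp
  finally show ?thesis .
qed



lemma geom:
  fixes x :: real
  assumes "p \<le> q"
  shows "(x - 1) * (\<Sum>t\<in>{p..<q}. x ^ t) = x ^ q - x ^ p"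
  using assms
proof (induction q rule: dec_induct)
  case base then show ?case by simp
next
  case (step q)
  then show ?case by (simp add: algebra_simps)
qed

lemma geom2:
  fixes x :: real
  assumes "p \<le> q" "x \<noteq> 1"
  shows "(\<Sum>t\<in>{p..<q}. x ^ (t + 2)) = x^2 * (x ^ q - x ^ p) / (x - 1)"
proof -
  have "(\<Sum>t\<in>{p..<q}. x ^ (t + 2)) = x^2 * (\<Sum>t\<in>{p..<q}. x ^ t)"
    by (simp add: sum_distrib_left power_add power2_eq_square mult_ac)
  also have "\<dots> = x^2 * ((x - 1) * (\<Sum>t\<in>{p..<q}. x ^ t)) / (x - 1)" using assms(2) by simp
  also have "\<dots> = x^2 * (x ^ q - x ^ p) / (x - 1)" using geom[OF assms(1)] by simp
  finally show ?thesis .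
qed

lemma wt_remove:
  assumes "j \<in> {1..m}"
  shows "wt m v Q = v j ^ label Q j * (\<Prod>k\<in>{1..m}-{j}. v k ^ label Q k)"
  unfolding wt_def using assms by (simp add: prod.remove)

lemma Cj_eq:
  assumes j: "j \<in> {1..m}"
  shows "Cj m u Q j = (\<Prod>k\<in>{1..m}-{j}. u k ^ label Q k) * (\<Prod>k\<in>{1..<j}. u k)"
proof -
  have "Cj m u Q j = (\<Prod>k\<in>{1..m}-{j}. u k ^ label Q k * (if k < j then u k else 1))"
    unfolding Cj_def by (rule prod.cong) auto
  also have "\<dots> = (\<Prod>k\<in>{1..m}-{j}. u k ^ label Q k) * (\<Prod>k\<in>{1..m}-{j}. if k < j then u k else 1)"
    by (rule prod.distrib)
  also have "(\<Prod>k\<in>{1..m}-{j}. if k < j then u k else 1) = (\<Prod>k\<in>{k\<in>{1..m}-{j}. k < j}. u k)"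
    by (rule prod.inter_filter[symmetric]) simp
  also have "{k\<in>{1..m}-{j}. k < j} = {1..<j}" using j by auto
  finally show ?thesis .
qed

lemma wt_j:
  assumes j: "2 \<le> j" "j \<le> m"
  shows "wt m (u(j - 1 := u (j - 1) * u j, j := 1)) Q = u j ^ label Q (j-1) * (\<Prod>k\<in>{1..m}-{j}. u k ^ label Q k)"
proof -
  let ?v = "u(j - 1 := u (j - 1) * u j, j := 1)"
  have jj: "j \<in> {1..m}" using j by simp
  have jm: "j - 1 \<in> {1..m}-{j}" using j by auto
  have "wt m ?v Q = (\<Prod>k\<in>{1..m}-{j}. ?v k ^ label Q k)" using wt_remove[OF jj, of ?v Q] by simp
  also have "\<dots> = (\<Prod>k\<in>{1..m}-{j}. u k ^ label Q k * (if k = j - 1 then u j ^ label Q k else 1))"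
    by (rule prod.cong) (auto simp: power_mult_distrib)
  also have "\<dots> = (\<Prod>k\<in>{1..m}-{j}. u k ^ label Q k) * (\<Prod>k\<in>{1..m}-{j}. if k = j - 1 then u j ^ label Q k else 1)"
    by (rule prod.distrib)
  also have "(\<Prod>k\<in>{1..m}-{j}. if k = j - 1 then u j ^ label Q k else 1) = u j ^ label Q (j-1)"
    using jm by (subst prod.delta) auto
  finally show ?thesis by (simp only: mult.commute)
qed

lemma wt_1:
  assumes m: "1 \<le> m"
  shows "wt m (u(1 := 1)) Q = (\<Prod>k\<in>{1..m}-{1}. u k ^ label Q k)"
proof -
  have "wt m (u(1 := 1)) Q = (\<Prod>k\<in>{1..m}-{1}. (u(1:=1)) k ^ label Q k)"
    using wt_remove[of 1 m "u(1:=1)" Q] m by simp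
  also have "\<dots> = (\<Prod>k\<in>{1..m}-{1}. u k ^ label Q k)" by (rule prod.cong) auto
  finally show ?thesis .
qed



lemma prod_upto: "1 \<le> (j::nat) \<Longrightarrow> (\<Prod>i=1..j. u i) = (\<Prod>i\<in>{1..<j}. u i) * (u j :: real)"
proof -
  assume "1 \<le> j"
  have "{1..j} = insert j {1..<j}" using \<open>1 \<le> j\<close> by auto
  then show ?thesis by (simp add: mult.commute)
qed

lemma per_Q:
  assumes Q: "Q \<in> Pi_m m n" and m: "1 \<le> m" and u: "\<forall>j\<in>{1..m}. u j \<noteq> 1"
  shows "(\<Sum>c\<in>Ch m Q. wt m u (child n Q c)) =
     (\<Prod>i=1..m. u i) * wt m u Q
   + u 1 * (wt m u Q - u 1 * wt m (u(1 := 1)) Q) / (u 1 - 1)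
   + (\<Sum>j=2..m. (\<Prod>i=1..j. u i) * (wt m u Q - wt m (u(j - 1 := u (j - 1) * u j, j := 1)) Q) / (u j - 1))"
proof -
  have P: "partition_on {1..n} Q" using PiD[OF Q] by simp
  define X where "X j = Cj m u Q j * (\<Sum>t\<in>{cnt Q (ub n Q j)..<cnt Q (rs Q j)}. u j ^ (t + 2))" for j
  have s2: "wt m u (add1 n Q) = (\<Prod>i=1..m. u i) * wt m u Q"
  proof -
    have "wt m u (add1 n Q) = (\<Prod>k=1..m. u k * u k ^ label Q k)"
      unfolding wt_def by (rule prod.cong) (auto simp: label_add1[OF P])
    then show ?thesis unfolding wt_def by (simp add: prod.distrib)
  qed
  have s4: "(\<Sum>j\<in>{1..m}. X j) = X 1 + (\<Sum>j=2..m. X j)"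
  proof -
    have "{1..m} = insert 1 {2..m}" using m by auto
    then show ?thesis by simp
  qed
  have lab: "label Q k = Suc (cnt Q (rs Q k))" if "1 \<le> k" for k using label_cnt[OF P that] .
  have s5: "X 1 = u 1 * (wt m u Q - u 1 * wt m (u(1 := 1)) Q) / (u 1 - 1)"
  proof -
    have j1: "1 \<in> {1..m}" using m by simp
    have u1: "u 1 \<noteq> 1" using u j1 by blast
    have c0: "cnt Q (ub n Q 1) = 0"
    proof -
      have "{B\<in>Q. Suc n < Max B} = {}" using po_Max(3)[OF P] by fastforce
      then have "card {B\<in>Q. Suc n < Max B} = 0" by (metis card.empty)
      then show ?thesis unfolding cnt_def ub_def by simp
    qed
    let ?D = "\<Prod>k\<in>{1..m}-{1}. u k ^ label Q k"
    let ?c = "cnt Q (rs Q 1)"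
    have "X 1 = ?D * (u 1 ^ 2 * (u 1 ^ ?c - u 1 ^ 0) / (u 1 - 1))"
      unfolding X_def c0 using Cj_eq[OF j1, of u Q] geom2[of 0 ?c "u 1"] u1 by simp
    moreover have "wt m u Q = u 1 ^ Suc ?c * ?D" using wt_remove[OF j1, of u Q] lab[of 1] by simp
    moreover have "wt m (u(1 := 1)) Q = ?D" using wt_1[OF m] .
    ultimately show ?thesis using u1 by (simp add: field_simps power2_eq_square)
  qed
  have s6: "X j = (\<Prod>i=1..j. u i) * (wt m u Q - wt m (u(j - 1 := u (j - 1) * u j, j := 1)) Q) / (u j - 1)"
    if j: "j \<in> {2..m}" for j
  proof -
    have jj: "j \<in> {1..m}" and j2: "2 \<le> j" "j \<le> m" using j by auto
    have uj: "u j \<noteq> 1" using u jj by blast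
    let ?D = "\<Prod>k\<in>{1..m}-{j}. u k ^ label Q k"
    let ?P = "\<Prod>k\<in>{1..<j}. u k"
    let ?c = "cnt Q (rs Q j)"
    let ?c' = "cnt Q (rs Q (j-1))"
    have ubj: "ub n Q j = rs Q (j-1)" unfolding ub_def using j2 by simp
    have "rs Q j \<le> rs Q (j-1)" using rs_antimono[OF P, of "j-1" j] j2 by simp
    then have le: "?c' \<le> ?c" using cnt_mono[OF P] by simp
    have "X j = (?D * ?P) * (u j ^ 2 * (u j ^ ?c - u j ^ ?c') / (u j - 1))"
      unfolding X_def ubj using Cj_eq[OF jj, of u Q] geom2[OF le uj] by simp
    moreover have "wt m u Q = u j ^ Suc ?c * ?D" using wt_remove[OF jj, of u Q] lab[of j] j2 by simp
    moreover have "wt m (u(j - 1 := u (j - 1) * u j, j := 1)) Q = u j ^ Suc ?c' * ?D"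
      using wt_j[OF j2, of u Q] lab[of "j-1"] j2 by simp
    moreover have "(\<Prod>i=1..j. u i) = ?P * u j" using prod_upto[of j u] j2 by simp
    ultimately show ?thesis using uj by (simp add: field_simps power2_eq_square)
  qed
  have "(\<Sum>c\<in>Ch m Q. wt m u (child n Q c)) = wt m u (add1 n Q) + (\<Sum>B\<in>Att m Q. wt m u (att n Q B))"
    by (rule sum_Ch[OF Q])
  also have "(\<Sum>B\<in>Att m Q. wt m u (att n Q B)) = (\<Sum>j\<in>{1..m}. X j)"
    unfolding X_def by (rule sum_Att[OF P m])
  also have "\<dots> = X 1 + (\<Sum>j=2..m. X j)" by (rule s4)
  also have "(\<Sum>j=2..m. X j) = (\<Sum>j=2..m. (\<Prod>i=1..j. u i) * (wt m u Q - wt m (u(j - 1 := u (j - 1) * u j, j := 1)) Q) / (u j - 1))"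
    by (rule sum.cong) (auto simp: s6)
  finally show ?thesis using s2 s5 by simp
qed

lemma Fcoeff_wt: "Fcoeff m v n = (\<Sum>P\<in>Pi_m m n. wt m v P)"
  unfolding Fcoeff_def wt_def ..

lemma Lg: "(\<Sum>Q\<in>S. c * (f Q - g Q) / e) = (c::real) * (sum f S - sum g S) / e"
  by (simp add: sum_subtractf[symmetric] sum_distrib_left sum_divide_distrib)

lemma recur:
  assumes m: "1 \<le> m" and u: "\<forall>j\<in>{1..m}. u j \<noteq> 1"
  shows "Fcoeff m u (Suc n) =
     (\<Prod>i=1..m. u i) * Fcoeff m u n
   + u 1 * (Fcoeff m u n - u 1 * Fcoeff m (u(1 := 1)) n) / (u 1 - 1)
   + (\<Sum>j=2..m. (\<Prod>i=1..j. u i) * (Fcoeff m u n - Fcoeff m (u(j - 1 := u (j - 1) * u j, j := 1)) n) / (u j - 1))"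
proof -
  have "Fcoeff m u (Suc n) = (\<Sum>Q\<in>Pi_m m n. \<Sum>c\<in>Ch m Q. wt m u (child n Q c))"
    unfolding Fcoeff_wt by (rule sum_decomp[OF m])
  also have "\<dots> = (\<Sum>Q\<in>Pi_m m n. (\<Prod>i=1..m. u i) * wt m u Q
   + u 1 * (wt m u Q - u 1 * wt m (u(1 := 1)) Q) / (u 1 - 1)
   + (\<Sum>j=2..m. (\<Prod>i=1..j. u i) * (wt m u Q - wt m (u(j - 1 := u (j - 1) * u j, j := 1)) Q) / (u j - 1)))"
    by (rule sum.cong) (auto simp: per_Q[OF _ m u])
  also have "\<dots> = (\<Prod>i=1..m. u i) * Fcoeff m u n
   + u 1 * (Fcoeff m u n - u 1 * Fcoeff m (u(1 := 1)) n) / (u 1 - 1)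
   + (\<Sum>j=2..m. (\<Prod>i=1..j. u i) * (Fcoeff m u n - Fcoeff m (u(j - 1 := u (j - 1) * u j, j := 1)) n) / (u j - 1))"
    unfolding Fcoeff_wt sum.distrib
    by (simp add: Lg sum_distrib_left[symmetric] sum.swap[of _ "{2..m}"])
  finally show ?thesis .
qed

lemma Fcoeff0: "Fcoeff m u 0 = (\<Prod>i=1..m. u i)"
proof -
  have "Pi_m m 0 = {{}}"
    unfolding Pi_m_def set_partitions_def has_nesting_stA
    by (auto simp: partition_on_empty arcs_def stA_def nest_def)
  moreover have "label {} k = 1" for k unfolding label_def has_nesting_stA
    by (auto simp: arcs_def stA_def nest_def)
  ultimately show ?thesis unfolding Fcoeff_def by simp
qed

theorem proposition2:
  fixes m :: nat and u :: "nat \<Rightarrow> real"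
  assumes "m \<ge> 1"
    and "\<forall>j\<in>{1..m}. u j \<noteq> 1"
  shows "Ftilde m u =
      fps_const (\<Prod>i=1..m. u i)
    + fps_X * fps_const (\<Prod>i=1..m. u i) * Ftilde m u
    + fps_X * fps_const (u 1) * (Ftilde m u - fps_const (u 1) * Ftilde m (u(1 := 1)))
        / fps_const (u 1 - 1)
    + fps_X * (\<Sum>j=2..m. fps_const (\<Prod>i=1..j. u i) *
        (Ftilde m u - Ftilde m (u(j - 1 := u (j - 1) * u j, j := 1))) / fps_const (u j - 1))"
  apply (rule fps_ext)
  subgoal for k
  proof (cases k)
    case 0
    then show ?thesis by (simp add: Ftilde_def Fcoeff0 mult.assoc)
  next
    case (Suc n)
    then show ?thesis using recur[OF assms, of n]
      by (simp add: Ftilde_def mult.assoc fps_sum_nth divide_inverse mult_ac)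
  qed
  done


end
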